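(* Let $A$ be a 0-dialgebra with involution over a field $\mathbb{F}$. On the vector space $A\oplus A$ define $(a,b)\dashv(c,d)=(a\dashv c-d\vdash b^\ast,\; a^\ast\dashv d+c\vdash b)$, $(a,b)\vdash(c,d)=(a\vdash c-d\dashv b^\ast,\; a^\ast\vdash d+c\dashv b)$ and $(a,b)^\ast=(a^\ast,-b)$. Then $A\oplus A$ with these operations is a 0-dialgebra with involution.
   Context: A 0-dialgebra is a vector space with two bilinear operations $\dashv,\vdash$ satisfying the bar identities $a\dashv(b\dashv c)=a\dashv(b\vdash c)$ and $(a\dashv b)\vdash c=(a\vdash b)\vdash c$ for all $a,b,c$. A 0-dialgebra with involution is a 0-dialgebra with a linear map $a\mapsto a^\ast$ such that $(a^\ast)^\ast=a$, $(a\dashv b)^\ast=b^\ast\vdash a^\ast$ and $(a\vdash b)^\ast=b^\ast\dashv a^\ast$ for all $a,b$. *)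

theory Defs
  imports Main "HOL.Vector_Spaces" "HOL-Library.Product_Plus"
begin

definition bilinear_op :: "('f::field \<Rightarrow> 'v::ab_group_add \<Rightarrow> 'v) \<Rightarrow> ('v \<Rightarrow> 'v \<Rightarrow> 'v) \<Rightarrow> bool" where
  "bilinear_op s m \<longleftrightarrow> (\<forall>b. Vector_Spaces.linear s s (\<lambda>a. m a b)) \<and> (\<forall>a. Vector_Spaces.linear s s (\<lambda>b. m a b))"

definition zero_dialgebra :: "('f::field \<Rightarrow> 'v::ab_group_add \<Rightarrow> 'v) \<Rightarrow> ('v \<Rightarrow> 'v \<Rightarrow> 'v) \<Rightarrow> ('v \<Rightarrow> 'v \<Rightarrow> 'v) \<Rightarrow> bool" where
  "zero_dialgebra s l r \<longleftrightarrow> vector_space s \<and> bilinear_op s l \<and> bilinear_op s r \<and>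
     (\<forall>a b c. l a (l b c) = l a (r b c)) \<and> (\<forall>a b c. r (l a b) c = r (r a b) c)"

text \<open>l m n = m \<dashv> n (left product), r m n = m \<turnstile> n (right product).\<close>

definition zero_dialgebra_inv :: "('f::field \<Rightarrow> 'v::ab_group_add \<Rightarrow> 'v) \<Rightarrow> ('v \<Rightarrow> 'v \<Rightarrow> 'v) \<Rightarrow> ('v \<Rightarrow> 'v \<Rightarrow> 'v) \<Rightarrow> ('v \<Rightarrow> 'v) \<Rightarrow> bool" where
  "zero_dialgebra_inv s l r star \<longleftrightarrow> zero_dialgebra s l r \<and> Vector_Spaces.linear s s star \<and>
     (\<forall>a. star (star a) = a) \<and> (\<forall>a b. star (l a b) = r (star b) (star a)) \<and> (\<forall>a b. star (r a b) = l (star b) (star a))"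

definition dbl_scale :: "('f \<Rightarrow> 'v \<Rightarrow> 'v) \<Rightarrow> 'f \<Rightarrow> 'v \<times> 'v \<Rightarrow> 'v \<times> 'v" where
  "dbl_scale s c p = (s c (fst p), s c (snd p))"

definition dbl_left :: "('v::ab_group_add \<Rightarrow> 'v \<Rightarrow> 'v) \<Rightarrow> ('v \<Rightarrow> 'v \<Rightarrow> 'v) \<Rightarrow> ('v \<Rightarrow> 'v) \<Rightarrow> 'v \<times> 'v \<Rightarrow> 'v \<times> 'v \<Rightarrow> 'v \<times> 'v" where
  "dbl_left l r star p q = (case p of (a, b) \<Rightarrow> case q of (c, d) \<Rightarrow>
      (l a c - r d (star b), l (star a) d + r c b))"

definition dbl_right :: "('v::ab_group_add \<Rightarrow> 'v \<Rightarrow> 'v) \<Rightarrow> ('v \<Rightarrow> 'v \<Rightarrow> 'v) \<Rightarrow> ('v \<Rightarrow> 'v) \<Rightarrow> 'v \<times> 'v \<Rightarrow> 'v \<times> 'v \<Rightarrow> 'v \<times> 'v" where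
  "dbl_right l r star p q = (case p of (a, b) \<Rightarrow> case q of (c, d) \<Rightarrow>
      (r a c - l d (star b), r (star a) d + l c b))"

definition dbl_inv :: "('v::ab_group_add \<Rightarrow> 'v) \<Rightarrow> 'v \<times> 'v \<Rightarrow> 'v \<times> 'v" where
  "dbl_inv star p = (star (fst p), - snd p)"

end

theory Submission
  imports Defs
begin

lemma add_hom_neg:
  fixes f :: "'a::ab_group_add \<Rightarrow> 'b::ab_group_add"
  assumes "\<And>x y. f (x + y) = f x + f y"
  shows "f (- x) = - f x" "f (x - y) = f x - f y"
proof -
  have "f 0 = 0" using assms[of 0 0] by simp
  moreover have "f (x + - x) = f x + f (- x)" by (rule assms)
  ultimately show n: "f (- x) = - f x" by (simp add: eq_neg_iff_add_eq_0 add.commute)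
  have "f (x + - y) = f x + f (- y)" by (rule assms)
  moreover have "f (- y) = - f y"
  proof -
    have "f 0 = 0" using assms[of 0 0] by simp
    moreover have "f (y + - y) = f y + f (- y)" by (rule assms)
    ultimately show ?thesis by (simp add: eq_neg_iff_add_eq_0 add.commute)
  qed
  ultimately show "f (x - y) = f x - f y" by simp
qed

theorem proposition3p6:
  fixes s :: "'f::field \<Rightarrow> 'v::ab_group_add \<Rightarrow> 'v"
    and l r :: "'v \<Rightarrow> 'v \<Rightarrow> 'v" and star :: "'v \<Rightarrow> 'v"
  assumes "zero_dialgebra_inv s l r star"
  shows "zero_dialgebra_inv (dbl_scale s) (dbl_left l r star) (dbl_right l r star) (dbl_inv star)"
proof -
  note A = assms[unfolded zero_dialgebra_inv_def zero_dialgebra_def bilinear_op_def linear_iff]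
  have vs: "vector_space s" using A by blast
  have l1: "\<And>x y z. l (x + y) z = l x z + l y z" and l1s: "\<And>c x z. l (s c x) z = s c (l x z)"
   and l2: "\<And>x y z. l z (x + y) = l z x + l z y" and l2s: "\<And>c x z. l z (s c x) = s c (l z x)"
   and r1: "\<And>x y z. r (x + y) z = r x z + r y z" and r1s: "\<And>c x z. r (s c x) z = s c (r x z)"
   and r2: "\<And>x y z. r z (x + y) = r z x + r z y" and r2s: "\<And>c x z. r z (s c x) = s c (r z x)"
   and st: "\<And>x y. star (x + y) = star x + star y" and sts: "\<And>c x. star (s c x) = s c (star x)"
    using A by auto
  have stst: "\<And>a. star (star a) = a" and stl: "\<And>a b. star (l a b) = r (star b) (star a)"
    and str: "\<And>a b. star (r a b) = l (star b) (star a)"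
    and bar1: "\<And>a b c. l a (l b c) = l a (r b c)" and bar2: "\<And>a b c. r (l a b) c = r (r a b) c"
    using A by auto
  have sa: "\<And>c x y. s c (x + y) = s c x + s c y" using vs by (simp add: vector_space_def)
  have vsa: "\<And>a b x. s (a + b) x = s a x + s b x" "\<And>a b x. s a (s b x) = s (a * b) x" "\<And>x. s 1 x = x"
    using vs by (simp_all add: vector_space_def)
  have sn: "\<And>c x. s c (- x) = - s c x" "\<And>c x y. s c (x - y) = s c x - s c y"
    using add_hom_neg[of "s c" for c, OF sa] by blast+
  have ln: "\<And>x z. l (- x) z = - l x z" "\<And>x y z. l (x - y) z = l x z - l y z"
    using add_hom_neg[of "\<lambda>x. l x z" for z, OF l1] by blast+
  have ln2: "\<And>x z. l z (- x) = - l z x" "\<And>x y z. l z (x - y) = l z x - l z y"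
    using add_hom_neg[of "\<lambda>x. l z x" for z, OF l2] by blast+
  have rn: "\<And>x z. r (- x) z = - r x z" "\<And>x y z. r (x - y) z = r x z - r y z"
    using add_hom_neg[of "\<lambda>x. r x z" for z, OF r1] by blast+
  have rn2: "\<And>x z. r z (- x) = - r z x" "\<And>x y z. r z (x - y) = r z x - r z y"
    using add_hom_neg[of "\<lambda>x. r z x" for z, OF r2] by blast+
  have stn: "\<And>x. star (- x) = - star x" "\<And>x y. star (x - y) = star x - star y"
    using add_hom_neg[OF st] by blast+
  have vs2: "vector_space (dbl_scale s)"
    unfolding vector_space_def dbl_scale_def by (simp add: sa vsa)
  note simps = dbl_left_def dbl_right_def dbl_inv_def dbl_scale_def
    l1 l1s l2 l2s r1 r1s r2 r2s st sts sa sn ln ln2 rn rn2 stn stst stl str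
  show ?thesis
    unfolding zero_dialgebra_inv_def zero_dialgebra_def bilinear_op_def linear_iff
    using vs2
    apply (intro conjI allI; (simp only: split_paired_all)?)
    apply (simp_all add: simps algebra_simps)
    apply (simp_all add: bar1 bar2 algebra_simps)
    done
qed

end
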